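(* Let $\mathcal A$ be a von Neumann algebra, $G$ a group of normal $*$-automorphisms of $\mathcal A$, and $\varphi$ a faithful $G$-strongly quasi invariant state on $\mathcal A$ with cocycles $(x_g)_{g\in G}$. If $x_g\in\mathcal F(G)$ for some $g\in G$, then $x_g=\mathbf 1$.
   Context: $\varphi$ is $G$-strongly quasi invariant if $\varphi$ is a faithful normal state and for every $g\in G$ there is a self-adjoint $x_g\in\mathcal A$ with $\varphi(g(a))=\varphi(x_ga)$ for all $a\in\mathcal A$. $\mathcal F(G)=\{a\in\mathcal A:h(a)=a\ \forall h\in G\}$. *)

theory Defs
  imports Complex_Main
begin

class chilbert = ab_group_add +
  fixes scaleC :: "complex \<Rightarrow> 'a \<Rightarrow> 'a"
    and cinner :: "'a \<Rightarrow> 'a \<Rightarrow> complex"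
  assumes scaleC_add_right: "scaleC a (x + y) = scaleC a x + scaleC a y"
    and scaleC_add_left: "scaleC (a + b) x = scaleC a x + scaleC b x"
    and scaleC_scaleC: "scaleC a (scaleC b x) = scaleC (a * b) x"
    and scaleC_one: "scaleC 1 x = x"
    and cinner_commute: "cinner x y = cnj (cinner y x)"
    and cinner_add_right: "cinner x (y + z) = cinner x y + cinner x z"
    and cinner_scaleC_right: "cinner x (scaleC a y) = a * cinner x y"
    and cinner_self_nonneg: "Im (cinner x x) = 0 \<and> 0 \<le> Re (cinner x x)"
    and cinner_self_zero: "cinner x x = 0 \<Longrightarrow> x = 0"
    and cinner_complete:
      "(\<forall>e>0. \<exists>N::nat. \<forall>m\<ge>N. \<forall>n\<ge>N. sqrt (Re (cinner (X m - X n) (X m - X n))) < e)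
       \<Longrightarrow> \<exists>L. \<forall>e>0. \<exists>N::nat. \<forall>n\<ge>N. sqrt (Re (cinner (X n - L) (X n - L))) < e"

definition cnorm :: "'h::chilbert \<Rightarrow> real" where
  "cnorm x = sqrt (Re (cinner x x))"

definition bounded_op :: "('h::chilbert \<Rightarrow> 'h) \<Rightarrow> bool" where
  "bounded_op T \<longleftrightarrow> (\<forall>x y. T (x + y) = T x + T y) \<and> (\<forall>a x. T (scaleC a x) = scaleC a (T x))
     \<and> (\<exists>K. \<forall>x. cnorm (T x) \<le> K * cnorm x)"

definition adjoint :: "('h::chilbert \<Rightarrow> 'h) \<Rightarrow> ('h \<Rightarrow> 'h)" where
  "adjoint T = (THE S. \<forall>x y. cinner (T x) y = cinner x (S y))"

definition op_add :: "('h::chilbert \<Rightarrow> 'h) \<Rightarrow> ('h \<Rightarrow> 'h) \<Rightarrow> ('h \<Rightarrow> 'h)" where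
  "op_add A B = (\<lambda>x. A x + B x)"

definition op_scale :: "complex \<Rightarrow> ('h::chilbert \<Rightarrow> 'h) \<Rightarrow> ('h \<Rightarrow> 'h)" where
  "op_scale c A = (\<lambda>x. scaleC c (A x))"

definition op_zero :: "'h::chilbert \<Rightarrow> 'h" where
  "op_zero = (\<lambda>x. 0)"

text \<open>Operator product is composition; the unit is id.\<close>

definition op_pos :: "('h::chilbert \<Rightarrow> 'h) \<Rightarrow> bool" where
  "op_pos T \<longleftrightarrow> (\<forall>x. Im (cinner x (T x)) = 0 \<and> 0 \<le> Re (cinner x (T x)))"

definition op_le :: "('h::chilbert \<Rightarrow> 'h) \<Rightarrow> ('h \<Rightarrow> 'h) \<Rightarrow> bool" where
  "op_le A B \<longleftrightarrow> op_pos (\<lambda>x. B x - A x)"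

definition commutant :: "('h::chilbert \<Rightarrow> 'h) set \<Rightarrow> ('h \<Rightarrow> 'h) set" where
  "commutant S = {T. bounded_op T \<and> (\<forall>A\<in>S. T \<circ> A = A \<circ> T)}"

definition von_neumann_algebra :: "('h::chilbert \<Rightarrow> 'h) set \<Rightarrow> bool" where
  "von_neumann_algebra M \<longleftrightarrow> M \<subseteq> {T. bounded_op T} \<and> (\<forall>A\<in>M. adjoint A \<in> M)
     \<and> M = commutant (commutant M)"

definition is_lub_in :: "('h::chilbert \<Rightarrow> 'h) set \<Rightarrow> ('h \<Rightarrow> 'h) set \<Rightarrow> ('h \<Rightarrow> 'h) \<Rightarrow> bool" where
  "is_lub_in M D a \<longleftrightarrow> a \<in> M \<and> adjoint a = a \<and> (\<forall>A\<in>D. op_le A a)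
     \<and> (\<forall>b\<in>M. adjoint b = b \<and> (\<forall>A\<in>D. op_le A b) \<longrightarrow> op_le a b)"

text \<open>Bounded increasing nets of positive elements, represented by their (upward directed) ranges.\<close>
definition pos_directed_in :: "('h::chilbert \<Rightarrow> 'h) set \<Rightarrow> ('h \<Rightarrow> 'h) set \<Rightarrow> bool" where
  "pos_directed_in M D \<longleftrightarrow> D \<subseteq> M \<and> D \<noteq> {} \<and> (\<forall>A\<in>D. op_pos A)
     \<and> (\<forall>A\<in>D. \<forall>B\<in>D. \<exists>C\<in>D. op_le A C \<and> op_le B C)"

definition normal_star_automorphism ::
  "('h::chilbert \<Rightarrow> 'h) set \<Rightarrow> (('h \<Rightarrow> 'h) \<Rightarrow> ('h \<Rightarrow> 'h)) \<Rightarrow> bool" where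
  "normal_star_automorphism M \<alpha> \<longleftrightarrow> bij_betw \<alpha> M M
     \<and> (\<forall>A\<in>M. \<forall>B\<in>M. \<alpha> (op_add A B) = op_add (\<alpha> A) (\<alpha> B))
     \<and> (\<forall>c. \<forall>A\<in>M. \<alpha> (op_scale c A) = op_scale c (\<alpha> A))
     \<and> (\<forall>A\<in>M. \<forall>B\<in>M. \<alpha> (A \<circ> B) = \<alpha> A \<circ> \<alpha> B)
     \<and> (\<forall>A\<in>M. \<alpha> (adjoint A) = adjoint (\<alpha> A))
     \<and> (\<forall>D a. pos_directed_in M D \<and> is_lub_in M D a \<longrightarrow> is_lub_in M (\<alpha> ` D) (\<alpha> a))"

text \<open>G is a group (under composition, as maps on M) of normal *-automorphisms of M.\<close>
definition automorphism_group ::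
  "('h::chilbert \<Rightarrow> 'h) set \<Rightarrow> (('h \<Rightarrow> 'h) \<Rightarrow> ('h \<Rightarrow> 'h)) set \<Rightarrow> bool" where
  "automorphism_group M G \<longleftrightarrow> (\<forall>g\<in>G. normal_star_automorphism M g)
     \<and> (\<exists>e\<in>G. \<forall>a\<in>M. e a = a)
     \<and> (\<forall>g\<in>G. \<forall>h\<in>G. \<exists>k\<in>G. \<forall>a\<in>M. k a = g (h a))
     \<and> (\<forall>g\<in>G. \<exists>k\<in>G. \<forall>a\<in>M. k (g a) = a \<and> g (k a) = a)"

definition is_state :: "('h::chilbert \<Rightarrow> 'h) set \<Rightarrow> (('h \<Rightarrow> 'h) \<Rightarrow> complex) \<Rightarrow> bool" where
  "is_state M \<phi> \<longleftrightarrow> (\<forall>A\<in>M. \<forall>B\<in>M. \<phi> (op_add A B) = \<phi> A + \<phi> B)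
     \<and> (\<forall>c. \<forall>A\<in>M. \<phi> (op_scale c A) = c * \<phi> A)
     \<and> (\<forall>A\<in>M. Im (\<phi> (adjoint A \<circ> A)) = 0 \<and> 0 \<le> Re (\<phi> (adjoint A \<circ> A)))
     \<and> \<phi> id = 1"

definition faithful :: "('h::chilbert \<Rightarrow> 'h) set \<Rightarrow> (('h \<Rightarrow> 'h) \<Rightarrow> complex) \<Rightarrow> bool" where
  "faithful M \<phi> \<longleftrightarrow> (\<forall>A\<in>M. \<phi> (adjoint A \<circ> A) = 0 \<longrightarrow> A = op_zero)"

definition normal_functional :: "('h::chilbert \<Rightarrow> 'h) set \<Rightarrow> (('h \<Rightarrow> 'h) \<Rightarrow> complex) \<Rightarrow> bool" where
  "normal_functional M \<phi> \<longleftrightarrow> (\<forall>D a. pos_directed_in M D \<and> is_lub_in M D a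
      \<longrightarrow> \<phi> a = complex_of_real (SUP A\<in>D. Re (\<phi> A)))"

definition strongly_quasi_invariant ::
  "('h::chilbert \<Rightarrow> 'h) set \<Rightarrow> (('h \<Rightarrow> 'h) \<Rightarrow> ('h \<Rightarrow> 'h)) set \<Rightarrow> (('h \<Rightarrow> 'h) \<Rightarrow> complex)
     \<Rightarrow> ((('h \<Rightarrow> 'h) \<Rightarrow> ('h \<Rightarrow> 'h)) \<Rightarrow> ('h \<Rightarrow> 'h)) \<Rightarrow> bool" where
  "strongly_quasi_invariant M G \<phi> x \<longleftrightarrow> is_state M \<phi> \<and> faithful M \<phi> \<and> normal_functional M \<phi>
     \<and> (\<forall>g\<in>G. x g \<in> M \<and> adjoint (x g) = x g \<and> (\<forall>a\<in>M. \<phi> (g a) = \<phi> (x g \<circ> a)))"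

definition fixed_points ::
  "('h::chilbert \<Rightarrow> 'h) set \<Rightarrow> (('h \<Rightarrow> 'h) \<Rightarrow> ('h \<Rightarrow> 'h)) set \<Rightarrow> ('h \<Rightarrow> 'h) set" where
  "fixed_points M G = {a\<in>M. \<forall>h\<in>G. h a = a}"

end

theory Submission imports Defs "HOL-Analysis.Inner_Product" begin

lemma scaleC_zero_right[simp]: "scaleC a (0::'a::chilbert) = 0"
  using scaleC_add_right[of a "0::'a" 0] by simp
lemma scaleC_zero_left[simp]: "scaleC 0 (x::'a::chilbert) = 0"
  using scaleC_add_left[of 0 0 x] by simp
lemma scaleC_minus_right: "scaleC a (- (x::'a::chilbert)) = - scaleC a x"
proof -
  have "scaleC a x + scaleC a (- x) = 0" using scaleC_add_right[of a x "-x"] by simp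
  then show ?thesis by (simp add: add_eq_0_iff)
qed
lemma scaleC_diff_right: "scaleC a ((x::'a::chilbert) - y) = scaleC a x - scaleC a y"
  using scaleC_add_right[of a x "-y"] scaleC_minus_right[of a y] by simp
lemma scaleC_minus_left: "scaleC (- a) (x::'a::chilbert) = - scaleC a x"
proof -
  have "scaleC a x + scaleC (- a) x = 0" using scaleC_add_left[of a "-a" x] by simp
  then show ?thesis by (simp add: add_eq_0_iff)
qed
lemma scaleC_minus1: "scaleC (-1) (x::'a::chilbert) = - x"
  using scaleC_minus_left[of 1 x] by (simp add: scaleC_one)
lemma cinner_zero_right[simp]: "cinner (x::'a::chilbert) 0 = 0"
  using cinner_add_right[of x 0 0] by simp
lemma cinner_zero_left[simp]: "cinner 0 (x::'a::chilbert) = 0"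
  using cinner_commute[of 0 x] by simp
lemma cinner_add_left: "cinner ((x::'a::chilbert) + y) z = cinner x z + cinner y z"
proof -
  have "cinner (x+y) z = cnj (cinner z (x+y))" by (rule cinner_commute)
  also have "\<dots> = cnj (cinner z x) + cnj (cinner z y)" by (simp add: cinner_add_right)
  also have "\<dots> = cinner x z + cinner y z" by (simp add: cinner_commute[of x z] cinner_commute[of y z])
  finally show ?thesis .
qed
lemma cinner_scaleC_left: "cinner (scaleC a (x::'a::chilbert)) y = cnj a * cinner x y"
proof -
  have "cinner (scaleC a x) y = cnj (cinner y (scaleC a x))" by (rule cinner_commute)
  also have "\<dots> = cnj a * cnj (cinner y x)" by (simp add: cinner_scaleC_right)
  also have "\<dots> = cnj a * cinner x y" by (simp add: cinner_commute[of x y])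
  finally show ?thesis .
qed
lemma cinner_minus_right: "cinner (x::'a::chilbert) (- y) = - cinner x y"
proof -
  have "cinner x y + cinner x (- y) = 0" using cinner_add_right[of x y "-y"] by simp
  then show ?thesis by (simp add: add_eq_0_iff)
qed
lemma cinner_diff_right: "cinner (x::'a::chilbert) (y - z) = cinner x y - cinner x z"
  using cinner_add_right[of x y "-z"] cinner_minus_right[of x z] by simp
lemma cinner_minus_left: "cinner (- (x::'a::chilbert)) y = - cinner x y"
proof -
  have "cinner x y + cinner (- x) y = 0" using cinner_add_left[of x "-x" y] by simp
  then show ?thesis by (simp add: add_eq_0_iff)
qed
lemma cinner_diff_left: "cinner ((x::'a::chilbert) - y) z = cinner x z - cinner y z"
  using cinner_add_left[of x "-y" z] cinner_minus_left[of y z] by simp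
lemma cinner_self_eq: "cinner (x::'a::chilbert) x = complex_of_real (Re (cinner x x))"
  using cinner_self_nonneg[of x] by (simp add: complex_eq_iff)
lemma cinner_ext: "(\<And>u. cinner u a = cinner u b) \<Longrightarrow> (a::'a::chilbert) = b"
  using cinner_diff_right[of "a-b" a b] cinner_self_zero[of "a-b"] by simp
typedef 'a hw = "UNIV :: ('a::chilbert) set" by auto

lemma cinner_Re_commute: "Re (cinner (x::'a::chilbert) y) = Re (cinner y x)"
  using cinner_commute[of x y] by simp

lemma hw_inner_zero: "Re (cinner (Rep_hw a) (Rep_hw a)) = 0 \<longleftrightarrow> a = Abs_hw 0"
proof
  assume "Re (cinner (Rep_hw a) (Rep_hw a)) = 0"
  then have "cinner (Rep_hw a) (Rep_hw a) = 0"
    using cinner_self_eq[of "Rep_hw a"] by simp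
  then have "Rep_hw a = 0" by (rule cinner_self_zero)
  then show "a = Abs_hw 0" by (metis Rep_hw_inverse)
next
  assume "a = Abs_hw 0"
  then show "Re (cinner (Rep_hw a) (Rep_hw a)) = 0" by (simp add: Abs_hw_inverse)
qed

instantiation hw :: (chilbert) real_inner
begin
definition "zero_hw = Abs_hw 0"
definition "plus_hw a b = Abs_hw (Rep_hw a + Rep_hw b)"
definition "minus_hw a b = Abs_hw (Rep_hw a - Rep_hw b)"
definition "uminus_hw a = Abs_hw (- Rep_hw a)"
definition "scaleR_hw r a = Abs_hw (scaleC (complex_of_real r) (Rep_hw a))"
definition "inner_hw a b = Re (cinner (Rep_hw a) (Rep_hw b))"
definition "norm_hw (a::'a hw) = sqrt (Re (cinner (Rep_hw a) (Rep_hw a)))"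
definition "dist_hw (a::'a hw) b = norm (a - b)"
definition "sgn_hw (a::'a hw) = Abs_hw (scaleC (complex_of_real (inverse (norm a))) (Rep_hw a))"
definition "uniformity_hw = (INF e\<in>{0 <..}. principal {(x::'a hw, y). dist x y < e})"
definition "open_hw (U::'a hw set) = (\<forall>x\<in>U. eventually (\<lambda>(x', y). x' = x \<longrightarrow> y \<in> U) uniformity)"
instance
apply standard
  apply (simp add: dist_hw_def)
  apply (simp add: plus_hw_def Abs_hw_inverse add.assoc)
  apply (simp add: plus_hw_def add.commute)
  apply (simp add: plus_hw_def zero_hw_def Abs_hw_inverse Rep_hw_inverse)
  apply (simp add: plus_hw_def zero_hw_def uminus_hw_def Abs_hw_inverse)
  apply (simp add: plus_hw_def minus_hw_def uminus_hw_def Abs_hw_inverse)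
  apply (simp add: plus_hw_def scaleR_hw_def Abs_hw_inverse scaleC_add_right)
  apply (simp add: plus_hw_def scaleR_hw_def Abs_hw_inverse scaleC_add_left)
  apply (simp add: scaleR_hw_def Abs_hw_inverse scaleC_scaleC)
  apply (simp add: scaleR_hw_def scaleC_one Rep_hw_inverse)
  apply (simp add: sgn_hw_def scaleR_hw_def)
  apply (simp add: uniformity_hw_def)
  apply (simp add: open_hw_def)
  apply (metis inner_hw_def cinner_Re_commute)
  apply (simp add: inner_hw_def plus_hw_def Abs_hw_inverse cinner_add_left)
  apply (simp add: inner_hw_def scaleR_hw_def Abs_hw_inverse cinner_scaleC_left)
  apply (simp add: inner_hw_def cinner_self_nonneg)
  apply (simp add: inner_hw_def zero_hw_def hw_inner_zero)
  apply (simp add: norm_hw_def inner_hw_def)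
  done
end


lemma norm_hw_eq: "norm (a::'a::chilbert hw) = cnorm (Rep_hw a)"
  by (simp add: norm_hw_def cnorm_def)
lemma Rep_hw_minus: "Rep_hw (a - b) = Rep_hw a - Rep_hw b"
  by (simp add: minus_hw_def Abs_hw_inverse)

instance hw :: (chilbert) complete_space
proof
  fix X :: "nat \<Rightarrow> 'a hw"
  assume "Cauchy X"
  then have "\<forall>e>0. \<exists>N::nat. \<forall>m\<ge>N. \<forall>n\<ge>N. sqrt (Re (cinner (Rep_hw (X m) - Rep_hw (X n)) (Rep_hw (X m) - Rep_hw (X n)))) < e"
    unfolding Cauchy_def dist_hw_def norm_hw_def Rep_hw_minus by blast
  from cinner_complete[OF this] obtain L where
    L: "\<forall>e>0. \<exists>N::nat. \<forall>n\<ge>N. sqrt (Re (cinner (Rep_hw (X n) - L) (Rep_hw (X n) - L))) < e" by blast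
  have "X \<longlonglongrightarrow> Abs_hw L"
    unfolding lim_sequentially dist_hw_def norm_hw_def Rep_hw_minus
    using L by (simp add: Abs_hw_inverse)
  then show "convergent X" by (auto simp: convergent_def)
qed

lemma quad_zero:
  fixes a b :: real
  assumes "b \<ge> 0" "\<And>t. 0 \<le> t*a + t^2*b"
  shows "a = 0"
proof -
  define t where "t = - a / (b+1)"
  have hb: "b + 1 > 0" using assms(1) by simp
  have st: "(b+1)*t = -a" using hb by (simp add: t_def)
  have "0 \<le> (b+1)^2 * (t*a + t^2*b)" using assms(2)[of t] by simp
  also have "(b+1)^2 * (t*a + t^2*b) = (b+1)*((b+1)*t)*a + ((b+1)*t)^2*b"
    by (simp add: algebra_simps power2_eq_square)
  also have "\<dots> = -(a^2)" unfolding st by (simp add: algebra_simps power2_eq_square)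
  finally have "a^2 \<le> 0" by simp
  then show ?thesis by simp
qed

lemma riesz_real:
  fixes f :: "'a::{real_inner,complete_space} \<Rightarrow> real"
  assumes add: "\<And>u v. f (u + v) = f u + f v"
    and scale: "\<And>r u. f (r *\<^sub>R u) = r * f u"
    and bnd: "\<And>u. \<bar>f u\<bar> \<le> norm u * K"
  shows "\<exists>z. \<forall>u. f u = inner z u"
proof -
  have bl: "bounded_linear f"
    by (rule bounded_linear_intro[where K=K]) (use add scale bnd in auto)
  define J where "J u = (norm u)^2/2 - f u" for u
  have Jlow: "- (K^2)/2 \<le> J u" for u
  proof -
    have "f u \<le> norm u * K" using bnd[of u] by simp
    moreover have "0 \<le> (norm u - K)^2" by simp
    ultimately show ?thesis unfolding J_def by (simp add: power2_eq_square algebra_simps)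
  qed
  define m where "m = Inf (range J)"
  have bdd: "bdd_below (range J)" using Jlow by (rule bdd_belowI2)
  have mle: "m \<le> J v" for v unfolding m_def by (rule cInf_lower) (use bdd in auto)
  have "\<exists>u. J u < m + inverse (real (Suc n))" for n
  proof -
    have "Inf (range J) < m + inverse (real (Suc n))" unfolding m_def by simp
    then show ?thesis using cInf_lessD[of "range J"] by blast
  qed
  then obtain u where u: "\<And>n. J (u n) < m + inverse (real (Suc n))" by metis
  have para: "J a + J b - 2 * J ((1/2) *\<^sub>R (a + b)) = (norm (a - b))^2 / 4" for a b
  proof -
    have fm: "f ((1/2) *\<^sub>R (a + b)) = (f a + f b) / 2" by (simp add: scale add)
    have n1: "(norm ((1/2) *\<^sub>R (a + b)))^2 = (norm (a + b))^2 / 4"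
      by (simp add: power2_eq_square)
    have pl: "(norm (a + b))^2 + (norm (a - b))^2 = 2 * (norm a)^2 + 2 * (norm b)^2"
      by (simp add: power2_norm_eq_inner inner_add_left inner_add_right inner_diff_left inner_diff_right inner_commute[of b a])
    show ?thesis unfolding J_def fm n1 using pl by (simp add: algebra_simps)
  qed
  have cau: "Cauchy u"
  proof (rule metric_CauchyI)
    fix e :: real assume "e > 0"
    obtain N where N: "inverse (real (Suc N)) < e^2 / 8"
      using \<open>e > 0\<close> by (metis reals_Archimedean zero_less_divide_iff zero_less_numeral zero_less_power)
    show "\<exists>M. \<forall>p\<ge>M. \<forall>n\<ge>M. dist (u p) (u n) < e"
    proof (intro exI allI impI)
      fix p n assume "N \<le> p" "N \<le> n"
      have ip: "inverse (real (Suc p)) \<le> inverse (real (Suc N))"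
        using \<open>N \<le> p\<close> by (simp add: le_imp_inverse_le)
      have inn: "inverse (real (Suc n)) \<le> inverse (real (Suc N))"
        using \<open>N \<le> n\<close> by (simp add: le_imp_inverse_le)
      have "(norm (u p - u n))^2 / 4 = J (u p) + J (u n) - 2 * J ((1/2) *\<^sub>R (u p + u n))"
        by (simp add: para)
      also have "\<dots> < e^2/4"
        using u[of p] u[of n] mle[of "(1/2) *\<^sub>R (u p + u n)"] ip inn N by linarith
      finally have "(norm (u p - u n))^2 < e^2" by simp
      then have "norm (u p - u n) < e"
        using \<open>e > 0\<close> by (meson norm_ge_zero power_less_imp_less_base less_imp_le)
      then show "dist (u p) (u n) < e" by (simp add: dist_norm)
    qed
  qed
  then obtain z where z: "u \<longlonglongrightarrow> z" using Cauchy_convergent_iff convergent_def by blast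
  have "(\<lambda>n. J (u n)) \<longlonglongrightarrow> J z"
    unfolding J_def by (intro tendsto_intros bounded_linear.tendsto[OF bl] z) auto
  moreover have "(\<lambda>n. J (u n)) \<longlonglongrightarrow> m"
  proof (rule tendsto_sandwich[of "\<lambda>n. m" _ _ "\<lambda>n. m + inverse (real (Suc n))"])
    show "\<forall>\<^sub>F n in sequentially. m \<le> J (u n)" using mle by simp
    show "\<forall>\<^sub>F n in sequentially. J (u n) \<le> m + inverse (real (Suc n))" using u by (simp add: less_imp_le)
    show "(\<lambda>n. m) \<longlonglongrightarrow> m" by simp
    show "(\<lambda>n. m + inverse (real (Suc n))) \<longlonglongrightarrow> m" by (rule LIMSEQ_inverse_real_of_nat_add)
  qed
  ultimately have Jz: "J z = m" using LIMSEQ_unique by blast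
  have "f v = inner z v" for v
  proof -
    have "0 \<le> t * (inner z v - f v) + t^2 * ((norm v)^2/2)" for t
    proof -
      have nn: "(norm (z + t *\<^sub>R v))^2 = (norm z)^2 + 2 * t * inner z v + t^2 * (norm v)^2"
        by (simp add: power2_norm_eq_inner inner_add_left inner_add_right inner_commute[of v z] algebra_simps) (simp add: power2_eq_square)
      have "J (z + t *\<^sub>R v) = J z + t * (inner z v - f v) + t^2 * ((norm v)^2/2)"
        unfolding J_def nn by (simp add: add scale algebra_simps)
      then show ?thesis using mle[of "z + t *\<^sub>R v"] Jz by linarith
    qed
    then have "inner z v - f v = 0" by (intro quad_zero[of "(norm v)^2/2"]) auto
    then show ?thesis by simp
  qed
  then show ?thesis by blast
qed

lemma Abs_hw_add: "Abs_hw (a + b) = Abs_hw a + Abs_hw (b::'a::chilbert)"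
  by (simp add: plus_hw_def Abs_hw_inverse)
lemma cnorm_hw: "cnorm (a::'a::chilbert) = norm (Abs_hw a)"
  by (simp add: norm_hw_eq Abs_hw_inverse)
lemma cnorm_nonneg: "0 \<le> cnorm (a::'a::chilbert)"
  by (simp add: cnorm_hw)
lemma cnorm_triangle: "cnorm (a + b) \<le> cnorm a + cnorm (b::'a::chilbert)"
  by (simp add: cnorm_hw Abs_hw_add norm_triangle_ineq)
lemma cinner_Re_cs: "Re (cinner a b) \<le> cnorm a * cnorm (b::'a::chilbert)"
proof -
  have "Re (cinner a b) = inner (Abs_hw a) (Abs_hw b)" by (simp add: inner_hw_def Abs_hw_inverse)
  also have "\<dots> \<le> norm (Abs_hw a) * norm (Abs_hw b)" by (rule norm_cauchy_schwarz)
  finally show ?thesis by (simp add: cnorm_hw)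
qed
lemma cnorm_scaleC: "cnorm (scaleC c a) = cmod c * cnorm (a::'a::chilbert)"
proof -
  have "cinner (scaleC c a) (scaleC c a) = (cnj c * c) * cinner a a"
    by (simp add: cinner_scaleC_left cinner_scaleC_right)
  also have "cnj c * c = complex_of_real ((cmod c)^2)"
    by (metis complex_norm_square mult.commute of_real_power)
  finally have "Re (cinner (scaleC c a) (scaleC c a)) = (cmod c)^2 * Re (cinner a a)"
    by simp
  then show ?thesis by (simp add: cnorm_def real_sqrt_mult)
qed
lemma cinner_cs: "cmod (cinner a b) \<le> cnorm a * cnorm (b::'a::chilbert)"
proof (cases "cinner a b = 0")
  case True then show ?thesis by (simp add: cnorm_nonneg)
next
  case False
  define l where "l = cnj (cinner a b) / complex_of_real (cmod (cinner a b))"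
  have ml: "cmod l = 1" using False by (simp add: l_def norm_divide)
  have e: "cnj (cinner a b) * cinner a b = complex_of_real ((cmod (cinner a b))^2)"
    by (metis complex_norm_square mult.commute of_real_power)
  have "l * cinner a b = complex_of_real ((cmod (cinner a b))^2) / complex_of_real (cmod (cinner a b))"
    unfolding l_def using e by (simp add: field_simps)
  also have "\<dots> = complex_of_real (cmod (cinner a b))"
    using False by (simp add: power2_eq_square)
  finally have "l * cinner a b = complex_of_real (cmod (cinner a b))" .
  then have "cmod (cinner a b) = Re (cinner a (scaleC l b))"
    by (simp add: cinner_scaleC_right)
  also have "\<dots> \<le> cnorm a * cnorm (scaleC l b)" by (rule cinner_Re_cs)
  also have "\<dots> = cnorm a * cnorm b" by (simp add: cnorm_scaleC ml)
  finally show ?thesis .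
qed

section \<open>Riesz and adjoints\<close>

lemma riesz_c:
  fixes f :: "'h::chilbert \<Rightarrow> complex"
  assumes add: "\<And>u v. f (u + v) = f u + f v"
    and scale: "\<And>c u. f (scaleC c u) = c * f u"
    and bnd: "\<And>u. cmod (f u) \<le> K * cnorm u"
  shows "\<exists>z. \<forall>u. f u = cinner z u"
proof -
  define g where "g a = Re (f (Rep_hw a))" for a :: "'h hw"
  have "\<exists>z. \<forall>u. g u = inner z u"
  proof (rule riesz_real[where K=K])
    fix u v :: "'h hw" and r :: real
    show "g (u + v) = g u + g v" by (simp add: g_def plus_hw_def Abs_hw_inverse add)
    show "g (r *\<^sub>R u) = r * g u" by (simp add: g_def scaleR_hw_def Abs_hw_inverse scale)
    have "\<bar>g u\<bar> \<le> cmod (f (Rep_hw u))" unfolding g_def by (rule abs_Re_le_cmod)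
    also have "\<dots> \<le> K * cnorm (Rep_hw u)" by (rule bnd)
    finally show "\<bar>g u\<bar> \<le> norm u * K" by (simp add: norm_hw_eq mult.commute)
  qed
  then obtain z where z: "\<And>u. g u = inner z u" by blast
  have re: "Re (f w) = Re (cinner (Rep_hw z) w)" for w
    using z[of "Abs_hw w"] by (simp add: g_def inner_hw_def Abs_hw_inverse)
  have "f w = cinner (Rep_hw z) w" for w
  proof (rule complex_eqI)
    show "Re (f w) = Re (cinner (Rep_hw z) w)" by (rule re)
    have "Re (f (scaleC \<i> w)) = Re (cinner (Rep_hw z) (scaleC \<i> w))" by (rule re)
    then show "Im (f w) = Im (cinner (Rep_hw z) w)" by (simp add: scale cinner_scaleC_right)
  qed
  then show ?thesis by blast
qed

lemma bounded_op_nonneg: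
  assumes "bounded_op T"
  shows "\<exists>K\<ge>0. \<forall>u. cnorm (T u) \<le> K * cnorm u"
proof -
  obtain K where K: "\<And>u. cnorm (T u) \<le> K * cnorm u" using assms unfolding bounded_op_def by blast
  have "cnorm (T u) \<le> max K 0 * cnorm u" for u
    using K[of u] cnorm_nonneg[of u] by (smt (verit) mult_right_mono max.cobounded1)
  then show ?thesis by (intro exI[of _ "max K 0"]) auto
qed

lemma adjoint_exists:
  assumes "bounded_op (T::'h::chilbert \<Rightarrow> 'h)"
  shows "\<exists>S. \<forall>u v. cinner (T u) v = cinner u (S v)"
proof -
  obtain K where K0: "K \<ge> 0" and K: "\<And>u. cnorm (T u) \<le> K * cnorm u"
    using bounded_op_nonneg[OF assms] by blast
  have Tadd: "T (u + w) = T u + T w" and Tsc: "T (scaleC c u) = scaleC c (T u)" for u w c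
    using assms unfolding bounded_op_def by auto
  have "\<exists>z. \<forall>u. cinner v (T u) = cinner z u" for v
  proof (rule riesz_c[where K="cnorm v * K"])
    fix u w c
    show "cinner v (T (u + w)) = cinner v (T u) + cinner v (T w)" by (simp add: Tadd cinner_add_right)
    show "cinner v (T (scaleC c u)) = c * cinner v (T u)" by (simp add: Tsc cinner_scaleC_right)
    have "cmod (cinner v (T u)) \<le> cnorm v * cnorm (T u)" by (rule cinner_cs)
    also have "\<dots> \<le> cnorm v * (K * cnorm u)" by (rule mult_left_mono[OF K cnorm_nonneg])
    finally show "cmod (cinner v (T u)) \<le> cnorm v * K * cnorm u" by (simp add: mult.assoc)
  qed
  then obtain S where S: "\<And>v u. cinner v (T u) = cinner (S v) u" by metis
  have "cinner (T u) v = cinner u (S v)" for u v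
    using S[of v u] cinner_commute[of "T u" v] cinner_commute[of u "S v"] by simp
  then show ?thesis by blast
qed

lemma adjoint_unique:
  assumes "\<And>u v. cinner (T u) v = cinner u (S v)"
  shows "adjoint T = (S::'h::chilbert \<Rightarrow> 'h)"
  unfolding adjoint_def
proof (rule the_equality)
  show "\<forall>u v. cinner (T u) v = cinner u (S v)" using assms by blast
  fix S' assume S': "\<forall>u v. cinner (T u) v = cinner u (S' v)"
  show "S' = S"
  proof
    fix v show "S' v = S v" by (rule cinner_ext) (use S' assms in metis)
  qed
qed

lemma adjoint_prop:
  assumes "bounded_op (T::'h::chilbert \<Rightarrow> 'h)"
  shows "cinner (T u) v = cinner u (adjoint T v)"
proof -
  obtain S where S: "\<And>u v. cinner (T u) v = cinner u (S v)" using adjoint_exists[OF assms] by blast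
  show ?thesis using S adjoint_unique[OF S] by simp
qed


section \<open>Von Neumann algebra closure\<close>

lemma bounded_op_diff:
  assumes "bounded_op T" shows "T (a - b) = T a - T b"
proof -
  have "T (a - b + b) = T (a - b) + T b" using assms unfolding bounded_op_def by blast
  then have "T (a - b) + T b = T a" by simp
  then show ?thesis by (simp add: eq_diff_eq)
qed

lemma vn_mem:
  assumes "von_neumann_algebra M"
  shows "T \<in> M \<longleftrightarrow> bounded_op T \<and> (\<forall>C\<in>commutant M. T \<circ> C = C \<circ> T)"
proof -
  have eq: "M = commutant (commutant M)" using assms unfolding von_neumann_algebra_def by blast
  have "T \<in> M \<longleftrightarrow> T \<in> commutant (commutant M)" using eq by (rule arg_cong)
  also have "\<dots> \<longleftrightarrow> bounded_op T \<and> (\<forall>C\<in>commutant M. T \<circ> C = C \<circ> T)"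
    unfolding commutant_def[of "commutant M"] by simp
  finally show ?thesis .
qed

lemma comm_lin:
  assumes "C \<in> commutant M"
  shows "C (a + b) = C a + C b" "C (scaleC c a) = scaleC c (C a)"
  using assms unfolding commutant_def bounded_op_def by auto

lemma bounded_id: "bounded_op (id :: 'h::chilbert \<Rightarrow> 'h)"
  unfolding bounded_op_def by (auto intro: exI[of _ 1])

lemma vn_id: assumes "von_neumann_algebra M" shows "id \<in> M"
  using vn_mem[OF assms] bounded_id by auto

lemma vn_add:
  assumes vn: "von_neumann_algebra M" and A: "A \<in> M" and B: "B \<in> M"
  shows "op_add A B \<in> M"
proof -
  have bA: "bounded_op A" and cA: "\<forall>C\<in>commutant M. A \<circ> C = C \<circ> A" using A vn_mem[OF vn] by auto
  have bB: "bounded_op B" and cB: "\<forall>C\<in>commutant M. B \<circ> C = C \<circ> B" using B vn_mem[OF vn] by auto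
  obtain K1 where K1: "\<And>u. cnorm (A u) \<le> K1 * cnorm u" using bA unfolding bounded_op_def by blast
  obtain K2 where K2: "\<And>u. cnorm (B u) \<le> K2 * cnorm u" using bB unfolding bounded_op_def by blast
  have "bounded_op (op_add A B)"
    unfolding bounded_op_def op_add_def
  proof (intro conjI allI exI)
    fix x y show "A (x + y) + B (x + y) = A x + B x + (A y + B y)"
      using bA bB unfolding bounded_op_def by (simp add: algebra_simps)
  next
    fix a x show "A (scaleC a x) + B (scaleC a x) = scaleC a (A x + B x)"
      using bA bB unfolding bounded_op_def by (simp add: scaleC_add_right)
  next
    fix x show "cnorm (A x + B x) \<le> (K1 + K2) * cnorm x"
      using cnorm_triangle[of "A x" "B x"] K1[of x] K2[of x] by (simp add: algebra_simps)
  qed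
  moreover have "\<forall>C\<in>commutant M. op_add A B \<circ> C = C \<circ> op_add A B"
  proof
    fix C assume C: "C \<in> commutant M"
    show "op_add A B \<circ> C = C \<circ> op_add A B"
    proof
      fix u
      have "A (C u) = C (A u)" using cA C by (metis comp_apply)
      moreover have "B (C u) = C (B u)" using cB C by (metis comp_apply)
      ultimately show "(op_add A B \<circ> C) u = (C \<circ> op_add A B) u"
        by (simp add: op_add_def comm_lin[OF C])
    qed
  qed
  ultimately show ?thesis using vn_mem[OF vn] by blast
qed

lemma vn_scale:
  assumes vn: "von_neumann_algebra M" and A: "A \<in> M"
  shows "op_scale c A \<in> M"
proof -
  have bA: "bounded_op A" and cA: "\<forall>C\<in>commutant M. A \<circ> C = C \<circ> A" using A vn_mem[OF vn] by auto
  obtain K1 where K1: "\<And>u. cnorm (A u) \<le> K1 * cnorm u" using bA unfolding bounded_op_def by blast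
  have "bounded_op (op_scale c A)"
    unfolding bounded_op_def op_scale_def
  proof (intro conjI allI exI)
    fix x y show "scaleC c (A (x + y)) = scaleC c (A x) + scaleC c (A y)"
      using bA unfolding bounded_op_def by (simp add: scaleC_add_right)
  next
    fix a x show "scaleC c (A (scaleC a x)) = scaleC a (scaleC c (A x))"
      using bA unfolding bounded_op_def by (simp add: scaleC_scaleC mult.commute)
  next
    fix x show "cnorm (scaleC c (A x)) \<le> (cmod c * K1) * cnorm x"
      using K1[of x] by (simp add: cnorm_scaleC mult.assoc mult_left_mono)
  qed
  moreover have "\<forall>C\<in>commutant M. op_scale c A \<circ> C = C \<circ> op_scale c A"
  proof
    fix C assume C: "C \<in> commutant M"
    show "op_scale c A \<circ> C = C \<circ> op_scale c A"
    proof
      fix u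
      have "A (C u) = C (A u)" using cA C by (metis comp_apply)
      then show "(op_scale c A \<circ> C) u = (C \<circ> op_scale c A) u"
        by (simp add: op_scale_def comm_lin[OF C])
    qed
  qed
  ultimately show ?thesis using vn_mem[OF vn] by blast
qed

lemma vn_comp:
  assumes vn: "von_neumann_algebra M" and A: "A \<in> M" and B: "B \<in> M"
  shows "A \<circ> B \<in> M"
proof -
  have bA: "bounded_op A" and cA: "\<forall>C\<in>commutant M. A \<circ> C = C \<circ> A" using A vn_mem[OF vn] by auto
  have bB: "bounded_op B" and cB: "\<forall>C\<in>commutant M. B \<circ> C = C \<circ> B" using B vn_mem[OF vn] by auto
  obtain K1 where K10: "K1 \<ge> 0" and K1: "\<And>u. cnorm (A u) \<le> K1 * cnorm u" using bounded_op_nonneg[OF bA] by blast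
  obtain K2 where K2: "\<And>u. cnorm (B u) \<le> K2 * cnorm u" using bB unfolding bounded_op_def by blast
  have "bounded_op (A \<circ> B)"
    unfolding bounded_op_def
  proof (intro conjI allI exI)
    fix x y show "(A \<circ> B) (x + y) = (A \<circ> B) x + (A \<circ> B) y"
      using bA bB unfolding bounded_op_def by simp
  next
    fix a x show "(A \<circ> B) (scaleC a x) = scaleC a ((A \<circ> B) x)"
      using bA bB unfolding bounded_op_def by simp
  next
    fix x
    have "cnorm (A (B x)) \<le> K1 * cnorm (B x)" by (rule K1)
    also have "\<dots> \<le> K1 * (K2 * cnorm x)" by (rule mult_left_mono[OF K2 K10])
    finally show "cnorm ((A \<circ> B) x) \<le> (K1 * K2) * cnorm x" by (simp add: mult.assoc)
  qed
  moreover have "\<forall>C\<in>commutant M. (A \<circ> B) \<circ> C = C \<circ> (A \<circ> B)"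
  proof
    fix C assume C: "C \<in> commutant M"
    have "(A \<circ> B) \<circ> C = A \<circ> (B \<circ> C)" by (simp add: comp_assoc)
    also have "\<dots> = A \<circ> (C \<circ> B)" using cB C by simp
    also have "\<dots> = (A \<circ> C) \<circ> B" by (simp add: comp_assoc)
    also have "\<dots> = (C \<circ> A) \<circ> B" using cA C by simp
    finally show "(A \<circ> B) \<circ> C = C \<circ> (A \<circ> B)" by (simp add: comp_assoc)
  qed
  ultimately show ?thesis using vn_mem[OF vn] by blast
qed

theorem lemma2p11:
  fixes M :: "('h::chilbert \<Rightarrow> 'h) set"
    and G :: "(('h \<Rightarrow> 'h) \<Rightarrow> ('h \<Rightarrow> 'h)) set"
    and \<phi> :: "('h \<Rightarrow> 'h) \<Rightarrow> complex"
    and x :: "(('h \<Rightarrow> 'h) \<Rightarrow> ('h \<Rightarrow> 'h)) \<Rightarrow> ('h \<Rightarrow> 'h)"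
  assumes "von_neumann_algebra M"
    and "automorphism_group M G"
    and "strongly_quasi_invariant M G \<phi> x"
    and "g \<in> G"
    and "x g \<in> fixed_points M G"
  shows "x g = id"
proof -
  note vn = assms(1)
  define X where "X = x g"
  have st: "is_state M \<phi>" and fa: "faithful M \<phi>"
    and XM: "X \<in> M" and Xadj: "adjoint X = X" and qi: "\<And>a. a \<in> M \<Longrightarrow> \<phi> (g a) = \<phi> (X \<circ> a)"
    using assms(3,4) unfolding strongly_quasi_invariant_def X_def by auto
  have gX: "g X = X" using assms(4,5) unfolding fixed_points_def X_def by auto
  have nsa: "normal_star_automorphism M g" using assms(2,4) unfolding automorphism_group_def by blast
  then have bij: "bij_betw g M M" and gmul: "\<And>a b. a \<in> M \<Longrightarrow> b \<in> M \<Longrightarrow> g (a \<circ> b) = g a \<circ> g b"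
    unfolding normal_star_automorphism_def by (blast, blast)
  have idM: "id \<in> M" by (rule vn_id[OF vn])
  have sur: "g ` M = M" by (rule bij_betw_imp_surj_on[OF bij])
  have "id \<in> g ` M" by (subst sur) (rule idM)
  then obtain a where aM: "a \<in> M" and ga0: "id = g a" by (rule imageE)
  have ga: "g a = id" using ga0 by (rule sym)
  have "g id = g id \<circ> g a" using ga by simp
  also have "\<dots> = g (id \<circ> a)" using gmul[OF idM aM] by simp
  also have "\<dots> = id" using ga by simp
  finally have gid: "g id = id" .
  have add: "\<And>A B. A \<in> M \<Longrightarrow> B \<in> M \<Longrightarrow> \<phi> (op_add A B) = \<phi> A + \<phi> B"
    and sc: "\<And>c A. A \<in> M \<Longrightarrow> \<phi> (op_scale c A) = c * \<phi> A"
    and p1: "\<phi> id = 1" using st unfolding is_state_def by auto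
  have pX: "\<phi> X = 1" using qi[OF idM] gid p1 by simp
  have pXX: "\<phi> (X \<circ> X) = 1" using qi[OF XM] gX pX by simp
  have bX: "bounded_op X" using XM vn_mem[OF vn] by blast
  have Xsym: "cinner (X u) v = cinner u (X v)" for u v
    using adjoint_prop[OF bX, of u v] Xadj by simp
  define A where "A = op_add X (op_scale (-1) id)"
  have AM: "A \<in> M" unfolding A_def by (intro vn_add vn_scale vn idM XM)
  have Au: "A u = X u - u" for u by (simp add: A_def op_add_def op_scale_def scaleC_minus1)
  have "cinner (A u) v = cinner u (A v)" for u v
    by (simp add: Au cinner_diff_left cinner_diff_right Xsym)
  then have Aadj: "adjoint A = A" by (rule adjoint_unique)
  have XXM: "X \<circ> X \<in> M" by (rule vn_comp[OF vn XM XM])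
  have m2M: "op_scale (-2) X \<in> M" by (rule vn_scale[OF vn XM])
  have rM: "op_add (op_scale (-2) X) id \<in> M" by (rule vn_add[OF vn m2M idM])
  have AA: "A \<circ> A = op_add (X \<circ> X) (op_add (op_scale (-2) X) id)"
  proof
    fix u
    have m2: "scaleC (-2) (X u) = - X u - X u"
      using scaleC_add_left[of "-1" "-1" "X u"] by (simp add: scaleC_minus1)
    show "(A \<circ> A) u = op_add (X \<circ> X) (op_add (op_scale (-2) X) id) u"
      by (simp add: Au op_add_def op_scale_def m2 bounded_op_diff[OF bX] algebra_simps)
  qed
  have "\<phi> (adjoint A \<circ> A) = 0"
    unfolding Aadj AA using add[OF XXM rM] add[OF m2M idM] sc[OF XM] pX pXX p1 by simp
  then have "A = op_zero" using fa AM unfolding faithful_def by blast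
  then have Xid: "X u = u" for u
  proof -
    have "X u - u = 0" using \<open>A = op_zero\<close> Au[of u] by (simp add: op_zero_def)
    then show ?thesis by simp
  qed
  show ?thesis unfolding X_def[symmetric] using Xid by (simp add: fun_eq_iff)
qed

end
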